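(* Let $\mathcal B$ and $\tilde{\mathcal B}$ be two matrix bundles of $n\times n$ complex matrices such that the closure $\overline{\tilde{\mathcal B}}\supseteq\mathcal B$, and such that a matrix in $\mathcal B$ has at least as many distinct eigenvalues as a matrix in $\tilde{\mathcal B}$. Let $d=\{d_1\ge d_2\ge\cdots\}$ and $\tilde d=\{\tilde d_1\ge\tilde d_2\ge\cdots\}$ be the degree sequences of minimal polynomials associated with $\mathcal B$ and $\tilde{\mathcal B}$ respectively. Then, as partitions of $n$, $\tilde d\ge d$ in the dominance ordering, i.e. $$\tilde d_1+\tilde d_2+\cdots+\tilde d_j\ \ge\ d_1+d_2+\cdots+d_j\qquad\text{for each } j=1,2,\dots.$$
   Context: For an eigenvalue $\lambda$ of a matrix with elementary Jordan blocks of orders $n_1\ge n_2\ge\cdots\ge n_l>0$, its Segre characteristic is the infinite sequence $\{n_1,\dots,n_l,0,0,\dots\}$. Given $k$ nonincreasing sequences $\{n_{i1}\ge n_{i2}\ge\cdots\}$ of nonnegative integers ($i=1,\dots,k$, finitely many nonzero terms) with $\sum_{i,j}n_{ij}=n$, the matrix bundle they define is the set of all $n\times n$ complex matrices having exactly $k$ distinct eigenvalues (with arbitrary values) whose Segre characteristics are these sequences. The closure is taken in $\mathbb{C}^{n\times n}$. For a matrix in such a bundle, its minimal polynomials (invariant factors) $p_1,p_2,\dots$ satisfy $p_{i+1}\mid p_i$, and $\deg p_i=d_i=\sum_{j=1}^k n_{ji}$; the sequence $d=\{d_1\ge d_2\ge\cdots\}$ is the degree sequence of minimal polynomials associated with the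 bundle, and it is a partition of $n$. *)

theory Defs
  imports Complex_Main "Jordan_Normal_Form.Jordan_Normal_Form_Uniqueness"
    "HOL-Library.Multiset"
begin

text \<open>Segre characteristic of lambda for the square matrix A: the multiset of the
 orders of the elementary Jordan blocks of A belonging to lambda (the nonzero terms of
 the Segre sequence), read off from a Jordan normal form of A.\<close>
definition segre :: "complex mat \<Rightarrow> complex \<Rightarrow> nat multiset" where
  "segre A c = (let n_as = (SOME n_as. jordan_nf A n_as)
                in mset (map fst (filter (\<lambda>(k, e). e = c) n_as)))"

text \<open>The i-th term (0-indexed) of the nonincreasing sequence associated with a
 multiset of positive numbers, padded with zeros.\<close>
definition seq_term :: "nat multiset \<Rightarrow> nat \<Rightarrow> nat" where
  "seq_term S i = (if i < size S then rev (sorted_list_of_multiset S) ! i else 0)"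

definition valid_bundle_data :: "nat \<Rightarrow> nat multiset list \<Rightarrow> bool" where
  "valid_bundle_data n Ss \<longleftrightarrow>
     (\<forall>S\<in>set Ss. S \<noteq> {#} \<and> 0 \<notin># S) \<and> (\<Sum>S\<leftarrow>Ss. sum_mset S) = n"

text \<open>The matrix bundle: all n x n complex matrices having exactly k = length Ss distinct
 eigenvalues (arbitrary values) whose Segre characteristics are the given ones.\<close>
definition matrix_bundle :: "nat \<Rightarrow> nat multiset list \<Rightarrow> complex mat set" where
  "matrix_bundle n Ss = {A \<in> carrier_mat n n. \<exists>ls :: complex list.
      length ls = length Ss \<and> distinct ls \<and> set ls = {c. eigenvalue A c} \<and>
      (\<forall>i < length Ss. segre A (ls ! i) = Ss ! i)}"

definition mat_closure :: "nat \<Rightarrow> complex mat set \<Rightarrow> complex mat set" where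
  "mat_closure n M = {A \<in> carrier_mat n n. \<exists>X :: nat \<Rightarrow> complex mat.
      (\<forall>m. X m \<in> M) \<and> (\<forall>i < n. \<forall>j < n. (\<lambda>m. X m $$ (i, j)) \<longlonglongrightarrow> A $$ (i, j))}"

definition deg_seq :: "nat multiset list \<Rightarrow> nat \<Rightarrow> nat" where
  "deg_seq Ss i = (\<Sum>S\<leftarrow>Ss. seq_term S i)"

definition dominates :: "(nat \<Rightarrow> nat) \<Rightarrow> (nat \<Rightarrow> nat) \<Rightarrow> bool" where
  "dominates d e \<longleftrightarrow> (\<forall>j. (\<Sum>i<j. e i) \<le> (\<Sum>i<j. d i))"

end

theory Submission
  imports Defs "Jordan_Normal_Form.DL_Rank" "Jordan_Normal_Form.Gram_Schmidt"
    "Jordan_Normal_Form.Jordan_Normal_Form_Existence"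
begin

lemma real_bw:
  fixes f :: "nat \<Rightarrow> real"
  assumes "\<And>k. \<bar>f k\<bar> \<le> C"
  shows "\<exists>\<sigma> l. strict_mono \<sigma> \<and> (\<lambda>k. f (\<sigma> k)) \<longlonglongrightarrow> l"
proof -
  obtain \<sigma> where s: "strict_mono \<sigma>" "monoseq (\<lambda>k. f (\<sigma> k))" using seq_monosub by blast
  have "Bseq (\<lambda>k. f (\<sigma> k))" using assms by (intro BseqI'[of _ C]) auto
  then have "convergent (\<lambda>k. f (\<sigma> k))" using Bseq_monoseq_convergent s(2) by blast
  then show ?thesis using s(1) unfolding convergent_def by blast
qed

lemma complex_bw:
  fixes f :: "nat \<Rightarrow> complex"
  assumes "\<And>k. cmod (f k) \<le> C"
  shows "\<exists>\<sigma> l. strict_mono \<sigma> \<and> (\<lambda>k. f (\<sigma> k)) \<longlonglongrightarrow> l"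
proof -
  have "\<bar>Re (f k)\<bar> \<le> C" for k using assms[of k] abs_Re_le_cmod order_trans by blast
  then obtain \<sigma> a where s: "strict_mono \<sigma>" "(\<lambda>k. Re (f (\<sigma> k))) \<longlonglongrightarrow> a"
    using real_bw[of "\<lambda>k. Re (f k)" C] by blast
  have "\<bar>Im (f (\<sigma> k))\<bar> \<le> C" for k using assms[of "\<sigma> k"] abs_Im_le_cmod order_trans by blast
  then obtain \<tau> b where t: "strict_mono \<tau>" "(\<lambda>k. Im (f (\<sigma> (\<tau> k)))) \<longlonglongrightarrow> b"
    using real_bw[of "\<lambda>k. Im (f (\<sigma> k))"] by blast
  have a: "(\<lambda>k. Re (f (\<sigma> (\<tau> k)))) \<longlonglongrightarrow> a"
    using LIMSEQ_subseq_LIMSEQ[OF s(2) t(1)] by (simp add: o_def)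
  have "(\<lambda>k. f (\<sigma> (\<tau> k))) \<longlonglongrightarrow> Complex a b"
    using a t(2) by (simp add: tendsto_complex_iff)
  moreover have "strict_mono (\<sigma> \<circ> \<tau>)" using s(1) t(1) strict_mono_o by blast
  ultimately show ?thesis by (intro exI[of _ "\<sigma> \<circ> \<tau>"] exI[of _ "Complex a b"]) (simp_all add: o_def)
qed

lemma multi_bw:
  fixes F :: "nat \<Rightarrow> 'i \<Rightarrow> complex"
  assumes "finite I" and "\<And>k c. c \<in> I \<Longrightarrow> cmod (F k c) \<le> C"
  shows "\<exists>\<sigma> g. strict_mono \<sigma> \<and> (\<forall>c\<in>I. (\<lambda>k. F (\<sigma> k) c) \<longlonglongrightarrow> g c)"
  using assms
proof (induction I rule: finite_induct)
  case empty
  show ?case by (rule exI[of _ id]) (auto simp: strict_mono_def)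
next
  case (insert x I)
  then obtain \<sigma> g where s: "strict_mono \<sigma>" "\<forall>c\<in>I. (\<lambda>k. F (\<sigma> k) c) \<longlonglongrightarrow> g c" by auto
  obtain \<tau> l where t: "strict_mono \<tau>" "(\<lambda>k. F (\<sigma> (\<tau> k)) x) \<longlonglongrightarrow> l"
    using complex_bw[of "\<lambda>k. F (\<sigma> k) x" C] insert.prems by auto
  have "\<forall>c\<in>insert x I. (\<lambda>k. F (\<sigma> (\<tau> k)) c) \<longlonglongrightarrow> (g(x := l)) c"
  proof
    fix c assume c: "c \<in> insert x I"
    show "(\<lambda>k. F (\<sigma> (\<tau> k)) c) \<longlonglongrightarrow> (g(x := l)) c"
    proof (cases "c = x")
      case True then show ?thesis using t(2) by simp
    next
      case False
      then have "c \<in> I" using c by auto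
      then have "(\<lambda>k. F (\<sigma> k) c) \<longlonglongrightarrow> g c" using s(2) by auto
      from LIMSEQ_subseq_LIMSEQ[OF this t(1)] False show ?thesis by (simp add: o_def)
    qed
  qed
  moreover have "strict_mono (\<sigma> \<circ> \<tau>)" using s(1) t(1) strict_mono_o by blast
  ultimately show ?case by (intro exI[of _ "\<sigma> \<circ> \<tau>"] exI[of _ "g(x := l)"]) (simp_all add: o_def)
qed

lemma seq_term_zero: "size S \<le> i \<Longrightarrow> seq_term S i = 0"
  unfolding seq_term_def by simp

lemma seq_term_antimono:
  assumes "i \<le> j" shows "seq_term S j \<le> seq_term S i"
proof (cases "j < size S")
  case True
  let ?xs = "sorted_list_of_multiset S"
  have len: "length ?xs = size S" by (metis mset_sorted_list_of_multiset size_mset)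
  have "rev ?xs ! j = ?xs ! (size S - Suc j)" using True len by (simp add: rev_nth)
  moreover have "rev ?xs ! i = ?xs ! (size S - Suc i)" using True assms len by (simp add: rev_nth)
  moreover have "?xs ! (size S - Suc j) \<le> ?xs ! (size S - Suc i)"
    by (rule sorted_nth_mono) (use True assms len in auto)
  ultimately show ?thesis using True assms unfolding seq_term_def by auto
next
  case False
  then show ?thesis unfolding seq_term_def by auto
qed

lemma seq_sum:
  fixes f :: "nat \<Rightarrow> 'a::comm_monoid_add"
  assumes "f 0 = 0" "size S \<le> N"
  shows "(\<Sum>i<N. f (seq_term S i)) = (\<Sum>s\<in>#S. f s)"
proof -
  let ?xs = "rev (sorted_list_of_multiset S)"
  have len: "length ?xs = size S" by (metis length_rev mset_sorted_list_of_multiset size_mset)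
  have "(\<Sum>i<N. f (seq_term S i)) = (\<Sum>i<size S. f (seq_term S i))"
    by (rule sum.mono_neutral_right) (use assms in \<open>auto simp: seq_term_def\<close>)
  also have "\<dots> = (\<Sum>i<length ?xs. f (?xs ! i))"
    using len by (intro sum.cong) (auto simp: seq_term_def)
  also have "\<dots> = sum_list (map f ?xs)"
    by (simp add: sum_list_sum_nth atLeast0LessThan)
  also have "\<dots> = sum_mset (image_mset f (mset ?xs))"
    by (metis mset_map sum_mset_sum_list)
  also have "mset ?xs = S" by simp
  finally show ?thesis .
qed

lemma ivt_sum:
  fixes lo hi :: "nat \<Rightarrow> nat"
  assumes "\<forall>l<L. lo l \<le> hi l" "(\<Sum>l<L. lo l) \<le> m" "m \<le> (\<Sum>l<L. hi l)"
  shows "\<exists>c. (\<forall>l<L. lo l \<le> c l \<and> c l \<le> hi l) \<and> (\<Sum>l<L. c l) = m"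
  using assms
proof (induction L arbitrary: m)
  case 0
  then show ?case by auto
next
  case (Suc L)
  define H where "H = (\<Sum>l<L. hi l)"
  define cL where "cL = max (lo L) (m - H)"
  have lo_le: "(\<Sum>l<L. lo l) \<le> H" unfolding H_def using Suc.prems(1) by (intro sum_mono) auto
  have h1: "cL \<le> hi L" using Suc.prems unfolding cL_def H_def by auto
  have h2: "(\<Sum>l<L. lo l) \<le> m - cL" using Suc.prems lo_le unfolding cL_def by auto
  have h3: "m - cL \<le> H" unfolding cL_def by auto
  obtain c where c: "\<forall>l<L. lo l \<le> c l \<and> c l \<le> hi l" "(\<Sum>l<L. c l) = m - cL"
    using Suc.IH[of "m - cL"] Suc.prems(1) h2 h3 unfolding H_def by auto
  have h0: "lo L \<le> cL" unfolding cL_def by simp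
  have cLm: "cL \<le> m" using Suc.prems(2) lo_le unfolding cL_def by auto
  show ?case
    by (rule exI[of _ "c(L := cL)"]) (use c h0 h1 cLm in \<open>auto simp: less_Suc_eq\<close>)
qed

lemma lower_comb:
  fixes a :: "nat \<Rightarrow> nat \<Rightarrow> nat"
  assumes mono: "\<And>l i j. i \<le> j \<Longrightarrow> a l j \<le> a l i"
    and zero: "\<And>l i. l < L \<Longrightarrow> N \<le> i \<Longrightarrow> a l i = 0"
  shows "\<exists>c. (\<Sum>l<L. c l) \<le> m \<and>
     (\<Sum>i<N. min (\<Sum>l<L. a l i) m) \<le> (\<Sum>l<L. \<Sum>i<N. min (a l i) (c l))"
proof -
  define D where "D i = (\<Sum>l<L. a l i)" for i
  have Dmono: "i \<le> j \<Longrightarrow> D j \<le> D i" for i j unfolding D_def by (intro sum_mono mono)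
  show ?thesis
  proof (cases "D 0 \<le> m")
    case True
    have "(\<Sum>i<N. min (D i) m) \<le> (\<Sum>i<N. \<Sum>l<L. min (a l i) (a l 0))"
    proof (intro sum_mono)
      fix i have "min (D i) m \<le> D i" by simp
      also have "D i = (\<Sum>l<L. min (a l i) (a l 0))" unfolding D_def
        by (intro sum.cong) (auto simp: min_def mono)
      finally show "min (D i) m \<le> (\<Sum>l<L. min (a l i) (a l 0))" .
    qed
    also have "\<dots> = (\<Sum>l<L. \<Sum>i<N. min (a l i) (a l 0))" by (rule sum.swap)
    finally show ?thesis using True unfolding D_def by (intro exI[of _ "\<lambda>l. a l 0"]) auto
  next
    case False
    have ex: "\<exists>i. D i \<le> m" using zero[of _ N] by (intro exI[of _ N]) (simp add: D_def)
    define j where "j = (LEAST i. D i \<le> m)"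
    have Dj: "D j \<le> m" unfolding j_def using ex by (metis LeastI_ex)
    have j0: "j \<noteq> 0"
    proof
      assume "j = 0" with Dj False show False by simp
    qed
    have Dj1: "\<not> D (j - 1) \<le> m" unfolding j_def by (rule not_less_Least) (use j0 j_def in auto)
    obtain c where c: "\<forall>l<L. a l j \<le> c l \<and> c l \<le> a l (j - 1)" "(\<Sum>l<L. c l) = m"
      using ivt_sum[of L "\<lambda>l. a l j" "\<lambda>l. a l (j - 1)" m] Dj Dj1 mono
      unfolding D_def by fastforce
    have "(\<Sum>i<N. min (D i) m) \<le> (\<Sum>i<N. \<Sum>l<L. min (a l i) (c l))"
    proof (intro sum_mono)
      fix i
      show "min (D i) m \<le> (\<Sum>l<L. min (a l i) (c l))"
      proof (cases "j \<le> i")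
        case True
        have "D i = (\<Sum>l<L. min (a l i) (c l))" unfolding D_def
          using c(1) mono[OF True] by (intro sum.cong) (auto simp: min_def intro: order_trans)
        then show ?thesis by simp
      next
        case False
        then have "i \<le> j - 1" by auto
        then have "(\<Sum>l<L. min (a l i) (c l)) = (\<Sum>l<L. c l)"
        proof (intro sum.cong refl)
          fix l assume "l \<in> {..<L}" "i \<le> j - 1"
          then have "c l \<le> a l i" using c(1) mono[of i "j - 1" l] by auto
          then show "min (a l i) (c l) = c l" by simp
        qed
        then show ?thesis using c(2) by simp
      qed
    qed
    also have "\<dots> = (\<Sum>l<L. \<Sum>i<N. min (a l i) (c l))" by (rule sum.swap)
    finally show ?thesis using c(2) unfolding D_def by (intro exI[of _ c]) auto
  qed
qed

lemma upper_comb: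
  fixes a :: "nat \<Rightarrow> nat \<Rightarrow> nat"
  assumes "(\<Sum>l<L. c l) \<le> m"
  shows "(\<Sum>l<L. \<Sum>i<N. min (a l i) (c l)) \<le> (\<Sum>i<N. min (\<Sum>l<L. a l i) m)"
proof -
  have "(\<Sum>l<L. \<Sum>i<N. min (a l i) (c l)) = (\<Sum>i<N. \<Sum>l<L. min (a l i) (c l))" by (rule sum.swap)
  also have "\<dots> \<le> (\<Sum>i<N. min (\<Sum>l<L. a l i) m)"
  proof (intro sum_mono)
    fix i
    have "(\<Sum>l<L. min (a l i) (c l)) \<le> (\<Sum>l<L. a l i)" by (intro sum_mono) simp
    moreover have "(\<Sum>l<L. min (a l i) (c l)) \<le> m"
      using assms order_trans sum_mono[of "{..<L}" "\<lambda>l. min (a l i) (c l)" c] by fastforce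
    ultimately show "(\<Sum>l<L. min (a l i) (c l)) \<le> min (\<Sum>l<L. a l i) m" by simp
  qed
  finally show ?thesis .
qed

lemma dom_final:
  fixes dS dT :: "nat \<Rightarrow> nat"
  assumes monoT: "\<And>i j. i \<le> j \<Longrightarrow> dT j \<le> dT i"
    and zS: "\<And>i. NB \<le> i \<Longrightarrow> dS i = 0" and zT: "\<And>i. NB \<le> i \<Longrightarrow> dT i = 0"
    and tot: "(\<Sum>i<NB. dS i) = (\<Sum>i<NB. dT i)"
    and mins: "\<And>m. (\<Sum>i<NB. min (dT i) m) \<le> (\<Sum>i<NB. min (dS i) m)"
  shows "(\<Sum>i<j. dS i) \<le> (\<Sum>i<j. dT i)"
proof (cases "j = 0")
  case True then show ?thesis by simp
next
  case False
  define m where "m = dT (j - 1)"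
  define N where "N = max j NB"
  have ext: "(\<Sum>i<N. f i) = (\<Sum>i<NB. f i)" if "\<And>i. NB \<le> i \<Longrightarrow> f i = 0" for f :: "nat \<Rightarrow> nat"
    by (rule sum.mono_neutral_right) (use that in \<open>auto simp: N_def\<close>)
  have A: "(\<Sum>i<N. dS i - m) + (\<Sum>i<N. min (dS i) m) = (\<Sum>i<N. dS i)"
    by (subst sum.distrib[symmetric]) (intro sum.cong, auto)
  have B: "(\<Sum>i<N. dT i - m) + (\<Sum>i<N. min (dT i) m) = (\<Sum>i<N. dT i)"
    by (subst sum.distrib[symmetric]) (intro sum.cong, auto)
  have C: "(\<Sum>i<N. min (dT i) m) \<le> (\<Sum>i<N. min (dS i) m)"
    using mins[of m] ext[of "\<lambda>i. min (dT i) m"] ext[of "\<lambda>i. min (dS i) m"] zS zT by simp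
  have T: "(\<Sum>i<N. dS i) = (\<Sum>i<N. dT i)" using tot ext[of dS] ext[of dT] zS zT by simp
  have D: "(\<Sum>i<N. dS i - m) \<le> (\<Sum>i<N. dT i - m)" using A B C T by linarith
  have "(\<Sum>i<j. dS i) \<le> (\<Sum>i<j. m + (dS i - m))" by (intro sum_mono) auto
  also have "\<dots> = j * m + (\<Sum>i<j. dS i - m)" by (simp add: sum.distrib)
  also have "(\<Sum>i<j. dS i - m) \<le> (\<Sum>i<N. dS i - m)"
    by (rule sum_mono2) (auto simp: N_def)
  also note D
  also have "(\<Sum>i<N. dT i - m) = (\<Sum>i<j. dT i - m)"
  proof (rule sum.mono_neutral_right)
    show "\<forall>i\<in>{..<N} - {..<j}. dT i - m = 0"
      using monoT[of "j - 1"] unfolding m_def by auto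
  qed (auto simp: N_def)
  also have "j * m + (\<Sum>i<j. dT i - m) = (\<Sum>i<j. m + (dT i - m))" by (simp add: sum.distrib)
  also have "\<dots> = (\<Sum>i<j. dT i)"
    by (intro sum.cong) (use monoT[of _ "j - 1"] in \<open>auto simp: m_def\<close>)
  finally show ?thesis by simp
qed

definition cm :: "'a::field mat \<Rightarrow> 'a list \<Rightarrow> 'a mat" where
  "cm A mus = foldr (\<lambda>mu X. char_matrix A mu * X) mus (1\<^sub>m (dim_row A))"

lemma cm_Nil[simp]: "cm A [] = 1\<^sub>m (dim_row A)" unfolding cm_def by simp
lemma cm_Cons[simp]: "cm A (mu # mus) = char_matrix A mu * cm A mus" unfolding cm_def by simp

lemma char_matrix_carrier[simp]: "A \<in> carrier_mat n n \<Longrightarrow> char_matrix A e \<in> carrier_mat n n"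
  unfolding char_matrix_def by auto

lemma cm_carrier[simp]: "A \<in> carrier_mat n n \<Longrightarrow> cm A mus \<in> carrier_mat n n"
  by (induction mus) (auto intro!: mult_carrier_mat)

lemma dim_row_cm[simp]: "dim_row (cm A mus) = dim_row A"
  by (induction mus) (auto simp: char_matrix_def)

lemma sim_mult:
  assumes "similar_mat_wit A B P Q" "similar_mat_wit C D P Q" "dim_row C = dim_row A"
  shows "similar_mat_wit (A * C) (B * D) P Q"
proof -
  define n where "n = dim_row A"
  note a = similar_mat_witD[OF n_def assms(1)]
  note c = similar_mat_witD[of n C, OF _ assms(2)]
  have c: "C = P * D * Q" "C \<in> carrier_mat n n" "D \<in> carrier_mat n n" using c assms(3) n_def by auto
  have QPX: "Q * (P * X) = X" if "X \<in> carrier_mat n n" for X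
  proof -
    have "Q * (P * X) = (Q * P) * X" using assoc_mult_mat[OF a(7) a(6) that] by simp
    then show ?thesis using a(2) that by simp
  qed
  have "A * C = P * (B * D) * Q" using a c by (simp add: assoc_mult_mat[of _ n n _ n _ n] QPX)
  then show ?thesis using a c by (intro similar_mat_witI[of _ _ n]) auto
qed

lemma cm_similar:
  assumes "similar_mat_wit A B P Q"
  shows "similar_mat_wit (cm A mus) (cm B mus) P Q"
proof (induction mus)
  case Nil
  from similar_mat_wit_pow[OF assms, of 0] show ?case by simp
next
  case (Cons mu mus)
  have "dim_row (cm A mus) = dim_row (char_matrix A mu)"
    by (simp add: char_matrix_def)
  from sim_mult[OF similar_mat_wit_char_matrix[OF assms, of mu] Cons this] show ?case by simp
qed

lemma jb_split: "jordan_block s (a::'a::field) = jordan_block s 0 + a \<cdot>\<^sub>m 1\<^sub>m s"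
  by (rule eq_matI) auto

lemma pow_comm: assumes N: "(N::'a::field mat) \<in> carrier_mat s s"
  shows "N * N ^\<^sub>m c = N ^\<^sub>m c * N"
proof (induction c)
  case 0 then show ?case using N by simp
next
  case (Suc c)
  have "N * N ^\<^sub>m Suc c = (N * N ^\<^sub>m c) * N"
    using assoc_mult_mat[OF N pow_carrier_mat[OF N] N, of c] by simp
  also have "\<dots> = N ^\<^sub>m Suc c * N" using Suc N by simp
  finally show ?case .
qed

lemma jb_comm: "jordan_block s (a::'a::field) * (jordan_block s 0) ^\<^sub>m c
   = (jordan_block s 0) ^\<^sub>m c * jordan_block s a"
proof -
  let ?N = "jordan_block s (0::'a)"
  have N: "?N \<in> carrier_mat s s" by simp
  have P: "?N ^\<^sub>m c \<in> carrier_mat s s" by simp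
  have "jordan_block s a * ?N ^\<^sub>m c = (?N + a \<cdot>\<^sub>m 1\<^sub>m s) * ?N ^\<^sub>m c" using jb_split by metis
  also have "\<dots> = ?N * ?N ^\<^sub>m c + (a \<cdot>\<^sub>m 1\<^sub>m s) * ?N ^\<^sub>m c"
    by (rule add_mult_distrib_mat[OF N _ P]) simp
  also have "(a \<cdot>\<^sub>m 1\<^sub>m s) * ?N ^\<^sub>m c = a \<cdot>\<^sub>m ?N ^\<^sub>m c"
    using mult_smult_assoc_mat[OF one_carrier_mat P] by simp
  also have "?N * ?N ^\<^sub>m c = ?N ^\<^sub>m c * ?N" by (rule pow_comm[OF N])
  also have "a \<cdot>\<^sub>m ?N ^\<^sub>m c = ?N ^\<^sub>m c * (a \<cdot>\<^sub>m 1\<^sub>m s)"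
    using mult_smult_distrib[OF P one_carrier_mat] by simp
  also have "?N ^\<^sub>m c * ?N + ?N ^\<^sub>m c * (a \<cdot>\<^sub>m 1\<^sub>m s) = ?N ^\<^sub>m c * (?N + a \<cdot>\<^sub>m 1\<^sub>m s)"
    by (rule mult_add_distrib_mat[OF P N, symmetric]) simp
  also have "?N + a \<cdot>\<^sub>m 1\<^sub>m s = jordan_block s a" using jb_split by metis
  finally show ?thesis .
qed

lemma jb_inv: assumes "(a::'a::field) \<noteq> 0"
  shows "\<exists>C. C \<in> carrier_mat s s \<and> jordan_block s a * C = 1\<^sub>m s"
proof -
  have ut: "upper_triangular (jordan_block s a)" unfolding upper_triangular_def by auto
  have "diag_mat (jordan_block s a) = replicate s a" unfolding diag_mat_def
    by (rule nth_equalityI) auto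
  then have "det (jordan_block s a) = a ^ s"
    using det_upper_triangular[OF ut jordan_block_carrier] by simp
  then have "det (jordan_block s a) \<noteq> 0" using assms by simp
  from det_non_zero_imp_unit[OF jordan_block_carrier this, unfolded Units_def, of "()"]
  show ?thesis by (auto simp: ring_mat_def)
qed

lemma cm_jb_form:
  "\<exists>U C. U \<in> carrier_mat s s \<and> C \<in> carrier_mat s s \<and> U * C = 1\<^sub>m s \<and>
     cm (jordan_block s (e::'a::field)) mus = (jordan_block s 0) ^\<^sub>m (count (mset mus) e) * U"
proof (induction mus)
  case Nil
  show ?case by (rule exI[of _ "1\<^sub>m s"], rule exI[of _ "1\<^sub>m s"]) simp
next
  case (Cons mu mus)
  then obtain U C where UC: "U \<in> carrier_mat s s" "C \<in> carrier_mat s s" "U * C = 1\<^sub>m s"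
    and eq: "cm (jordan_block s e) mus = (jordan_block s 0) ^\<^sub>m (count (mset mus) e) * U" by blast
  let ?N = "jordan_block s (0::'a)"
  let ?c = "count (mset mus) e"
  have N: "?N \<in> carrier_mat s s" by simp
  have P: "?N ^\<^sub>m ?c \<in> carrier_mat s s" by simp
  have cmC: "cm (jordan_block s e) (mu # mus) = jordan_block s (e - mu) * (?N ^\<^sub>m ?c * U)"
    using eq by (simp add: char_matrix_jordan_block)
  show ?case
  proof (cases "mu = e")
    case True
    have "jordan_block s (e - mu) * (?N ^\<^sub>m ?c * U) = (?N * ?N ^\<^sub>m ?c) * U"
      using True assoc_mult_mat[OF N P UC(1)] by simp
    also have "?N * ?N ^\<^sub>m ?c = ?N ^\<^sub>m (Suc ?c)" using pow_comm[OF N] by simp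
    finally show ?thesis using True cmC UC by (intro exI[of _ U] exI[of _ C]) auto
  next
    case False
    then have a: "e - mu \<noteq> 0" by simp
    obtain Ca where Ca: "Ca \<in> carrier_mat s s" "jordan_block s (e - mu) * Ca = 1\<^sub>m s"
      using jb_inv[OF a] by blast
    let ?J = "jordan_block s (e - mu)"
    have J: "?J \<in> carrier_mat s s" by simp
    have "?J * (?N ^\<^sub>m ?c * U) = (?J * ?N ^\<^sub>m ?c) * U" using assoc_mult_mat[OF J P UC(1)] by simp
    also have "?J * ?N ^\<^sub>m ?c = ?N ^\<^sub>m ?c * ?J" by (rule jb_comm)
    also have "(?N ^\<^sub>m ?c * ?J) * U = ?N ^\<^sub>m ?c * (?J * U)" by (rule assoc_mult_mat[OF P J UC(1)])
    finally have 1: "cm (jordan_block s e) (mu # mus) = ?N ^\<^sub>m count (mset (mu # mus)) e * (?J * U)"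
      using cmC False by simp
    have "(?J * U) * (C * Ca) = ?J * (U * (C * Ca))" by (rule assoc_mult_mat[OF J UC(1) mult_carrier_mat[OF UC(2) Ca(1)]])
    also have "U * (C * Ca) = (U * C) * Ca" by (rule assoc_mult_mat[OF UC(1) UC(2) Ca(1), symmetric])
    also have "\<dots> = Ca" using UC(3) Ca(1) by simp
    also have "?J * Ca = 1\<^sub>m s" by (rule Ca(2))
    finally show ?thesis using 1 J UC Ca by (intro exI[of _ "?J * U"] exI[of _ "C * Ca"]) auto
  qed
qed

lemma kernel_cm_jb: "kernel_dim (cm (jordan_block s (e::'a::field)) mus) = min (count (mset mus) e) s"
proof -
  obtain U C where UC: "U \<in> carrier_mat s s" "C \<in> carrier_mat s s" "U * C = 1\<^sub>m s"
    and eq: "cm (jordan_block s e) mus = (jordan_block s 0) ^\<^sub>m (count (mset mus) e) * U"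
    using cm_jb_form by blast
  have P: "(jordan_block s (0::'a)) ^\<^sub>m (count (mset mus) e) \<in> carrier_mat s s" by simp
  have dc: "dim_col (cm (jordan_block s e) mus) = s"
    using carrier_matD(2)[OF cm_carrier[OF jordan_block_carrier]] by blast
  have "kernel.dim s ((jordan_block s (0::'a)) ^\<^sub>m (count (mset mus) e) * U)
     = kernel.dim s ((jordan_block s (0::'a)) ^\<^sub>m (count (mset mus) e))"
    by (rule mat_kernel_dim_mult_eq_right[OF P UC])
  also have "\<dots> = min (count (mset mus) e) s"
    by (rule dim_kernel_zero_jordan_block_pow)
  moreover have "dim_col ((jordan_block s (0::'a)) ^\<^sub>m (count (mset mus) e) * U) = s"
    using UC by simp
  ultimately show ?thesis unfolding kernel_dim_def eq by simp
qed

lemma char_four: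
  assumes A: "A \<in> carrier_mat n1 n1" and D: "D \<in> carrier_mat n2 n2"
  shows "char_matrix (four_block_mat A (0\<^sub>m n1 n2) (0\<^sub>m n2 n1) D) mu
    = four_block_mat (char_matrix A mu) (0\<^sub>m n1 n2) (0\<^sub>m n2 n1) (char_matrix (D::'a::field mat) mu)"
  using A D unfolding char_matrix_def by (intro eq_matI) auto

lemma mult_four_diag:
  assumes X: "X \<in> carrier_mat n1 n1" and X': "X' \<in> carrier_mat n1 n1"
    and Y: "Y \<in> carrier_mat n2 n2" and Y': "(Y'::'a::field mat) \<in> carrier_mat n2 n2"
  shows "four_block_mat X (0\<^sub>m n1 n2) (0\<^sub>m n2 n1) Y * four_block_mat X' (0\<^sub>m n1 n2) (0\<^sub>m n2 n1) Y'
    = four_block_mat (X * X') (0\<^sub>m n1 n2) (0\<^sub>m n2 n1) (Y * Y')"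
  by (subst mult_four_block_mat[OF X zero_carrier_mat zero_carrier_mat Y X' zero_carrier_mat zero_carrier_mat Y'])
    (use X X' Y Y' in simp)

lemma cm_four:
  assumes A: "A \<in> carrier_mat n1 n1" and D: "(D::'a::field mat) \<in> carrier_mat n2 n2"
  shows "cm (four_block_mat A (0\<^sub>m n1 n2) (0\<^sub>m n2 n1) D) mus
    = four_block_mat (cm A mus) (0\<^sub>m n1 n2) (0\<^sub>m n2 n1) (cm D mus)"
proof (induction mus)
  case Nil
  show ?case using A D by simp
next
  case (Cons mu mus)
  show ?case unfolding cm_Cons Cons char_four[OF A D]
    by (rule mult_four_diag) (use A D in auto)
qed

lemma kernel_dim_0: "(M::'a::field mat) \<in> carrier_mat 0 0 \<Longrightarrow> kernel_dim M = 0"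
proof -
  assume M: "M \<in> carrier_mat 0 0"
  then have "M = 1\<^sub>m 0" by (intro eq_matI) auto
  then show ?thesis unfolding kernel_dim_def using kernel_one_mat(1)[of 0] M by simp
qed

lemma kernel_cm_jm:
  "kernel_dim (cm (jordan_matrix n_as) mus) = (\<Sum>(s,e)\<leftarrow>n_as. min (count (mset mus) (e::'a::field)) s)"
proof (induction n_as)
  case Nil
  have "jordan_matrix ([] :: (nat \<times> 'a) list) \<in> carrier_mat 0 0"
    using jordan_matrix_carrier[of "[] :: (nat \<times> 'a) list"] by simp
  then show ?case using kernel_dim_0[OF cm_carrier] by simp
next
  case (Cons se n_as)
  obtain s e where se: "se = (s, e)" by force
  let ?m = "sum_list (map fst n_as)"
  let ?J = "jordan_matrix n_as"
  have J: "?J \<in> carrier_mat ?m ?m" by simp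
  have jb: "jordan_block s e \<in> carrier_mat s s" by simp
  have eq: "cm (jordan_matrix (se # n_as)) mus
     = four_block_mat (cm (jordan_block s e) mus) (0\<^sub>m s ?m) (0\<^sub>m ?m s) (cm ?J mus)"
    unfolding se jordan_matrix_Cons by (rule cm_four[OF jb J])
  have dc: "dim_col (cm (jordan_matrix (se # n_as)) mus) = s + ?m"
    unfolding eq using carrier_matD(2)[OF cm_carrier[OF jb, of mus]] carrier_matD(2)[OF cm_carrier[OF J, of mus]] by simp
  have "kernel_dim (cm (jordan_matrix (se # n_as)) mus)
      = kernel.dim s (cm (jordan_block s e) mus) + kernel.dim ?m (cm ?J mus)"
    unfolding kernel_dim_def dc
    by (rule kernel_four_block_0_mat[OF eq cm_carrier[OF jb] cm_carrier[OF J]])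
  also have "kernel.dim s (cm (jordan_block s e) mus) = min (count (mset mus) e) s"
    using kernel_cm_jb[of s e mus] cm_carrier[OF jb, of mus] unfolding kernel_dim_def by simp
  also have "kernel.dim ?m (cm ?J mus) = (\<Sum>(s,e)\<leftarrow>n_as. min (count (mset mus) e) s)"
    using Cons cm_carrier[OF J, of mus] unfolding kernel_dim_def by simp
  finally show ?case using se by simp
qed

lemma kernel_cm_jnf:
  assumes A: "A \<in> carrier_mat n n" and jnf: "jordan_nf A n_as"
  shows "kernel_dim (cm A mus) = (\<Sum>(s,e)\<leftarrow>n_as. min (count (mset mus) (e::'a::field)) s)"
proof -
  from jnf[unfolded jordan_nf_def similar_mat_def] obtain P Q
    where wit: "similar_mat_wit A (jordan_matrix n_as) P Q" by auto
  have J: "jordan_matrix n_as \<in> carrier_mat n n"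
    using similar_mat_witD(5)[OF _ wit, of n] A by simp
  have "kernel.dim n (cm A mus) = kernel.dim n (cm (jordan_matrix n_as) mus)"
    by (rule similar_mat_wit_kernel_dim[OF cm_carrier[OF A] cm_similar[OF wit]])
  then show ?thesis using kernel_cm_jm[of n_as mus] cm_carrier[OF A, of mus] cm_carrier[OF J, of mus]
    unfolding kernel_dim_def by simp
qed

lemma poly_jordan_prod:
  assumes "0 \<notin> fst ` set n_as"
  shows "poly (\<Prod>(n,a)\<leftarrow>n_as. [:- a, 1:] ^ n) k = 0 \<longleftrightarrow> (k::'a::field) \<in> snd ` set n_as"
  using assms
proof (induction n_as)
  case Nil then show ?case by simp
next
  case (Cons na n_as)
  obtain n a where na: "na = (n, a)" by force
  have n: "n \<noteq> 0" using Cons.prems na by force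
  have "poly (\<Prod>(n,a)\<leftarrow>na # n_as. [:- a, 1:] ^ n) k
     = (k - a) ^ n * poly (\<Prod>(n,a)\<leftarrow>n_as. [:- a, 1:] ^ n) k" using na by simp
  then show ?case using Cons n na by auto
qed

lemma eigenvalue_jnf:
  assumes A: "A \<in> carrier_mat n n" and jnf: "jordan_nf A n_as"
  shows "eigenvalue A k \<longleftrightarrow> (k::'a::field) \<in> snd ` set n_as"
  unfolding eigenvalue_root_char_poly[OF A] jordan_nf_char_poly[OF jnf]
  by (rule poly_jordan_prod) (use jnf in \<open>simp add: jordan_nf_def\<close>)

definition ip :: "nat \<Rightarrow> complex vec \<Rightarrow> complex vec \<Rightarrow> complex" where
  "ip n u v = (\<Sum>r<n. u $ r * cnj (v $ r))"

definition orthonormal :: "nat \<Rightarrow> complex vec list \<Rightarrow> bool" where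
  "orthonormal n ws \<longleftrightarrow> (\<forall>i<length ws. \<forall>j<length ws. ip n (ws ! i) (ws ! j) = (if i = j then 1 else 0))"

lemma cip: "v \<in> carrier_vec n \<Longrightarrow> u \<bullet>c v = ip n u v"
  unfolding ip_def scalar_prod_def conjugate_vec_def
  by (auto simp: lessThan_atLeast0 intro!: sum.cong)

lemma ip_self: "ip n u u = complex_of_real (\<Sum>r<n. (cmod (u $ r))\<^sup>2)"
  unfolding ip_def of_real_sum by (intro sum.cong refl) (rule complex_norm_square[symmetric])

lemma ip_smult:
  assumes "u \<in> carrier_vec n" "v \<in> carrier_vec n"
  shows "ip n (c \<cdot>\<^sub>v u) (d \<cdot>\<^sub>v v) = c * cnj d * ip n u v"
  unfolding ip_def sum_distrib_left using assms by (intro sum.cong) auto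

lemma ip_entry_bound:
  assumes "ip n w w = 1" "r < n"
  shows "cmod (w $ r) \<le> 1"
proof -
  have "(cmod (w $ r))\<^sup>2 \<le> (\<Sum>r<n. (cmod (w $ r))\<^sup>2)"
    using assms(2) by (intro member_le_sum) auto
  also have "\<dots> = 1" using assms(1) unfolding ip_self by (metis of_real_eq_1_iff)
  finally show ?thesis by (simp add: power_le_one_iff)
qed

lemma kernel_ge_orth:
  assumes M: "M \<in> carrier_mat n n" and ws: "set ws \<subseteq> carrier_vec n"
    and ker: "\<forall>w\<in>set ws. M *\<^sub>v w = 0\<^sub>v n" and on: "orthonormal n ws"
  shows "length ws \<le> kernel_dim M"
proof -
  interpret K: kernel n n M by (unfold_locales, rule M)
  let ?t = "length ws"
  have dist: "distinct ws"
  proof (subst distinct_conv_nth, intro allI impI)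
    fix i j assume ij: "i < ?t" "j < ?t" "i \<noteq> j"
    show "ws ! i \<noteq> ws ! j"
    proof
      assume "ws ! i = ws ! j"
      then have "ip n (ws ! i) (ws ! j) = ip n (ws ! i) (ws ! i)" by simp
      with on ij show False unfolding orthonormal_def by auto
    qed
  qed
  define W where "W = mat_of_cols n ws"
  have W: "W \<in> carrier_mat n ?t" unfolding W_def by simp
  have cW: "cols W = ws" unfolding W_def using ws by simp
  have indep: "\<not> module.lin_dep class_ring (module_vec TYPE(complex) n) (set ws)"
  proof
    assume ld: "module.lin_dep class_ring (module_vec TYPE(complex) n) (set ws)"
    obtain v where v: "v \<in> carrier_vec ?t" "v \<noteq> 0\<^sub>v ?t" "W *\<^sub>v v = 0\<^sub>v n"
      using vec_space.lin_depE[OF W, unfolded cW, OF ld dist] by blast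
    have "v $ j = 0" if j: "j < ?t" for j
    proof -
      have Wv: "(W *\<^sub>v v) $ r = (\<Sum>i<?t. ws ! i $ r * v $ i)" if "r < n" for r
        using that W v(1) unfolding W_def
        by (auto simp: scalar_prod_def mat_of_cols_index lessThan_atLeast0 intro!: sum.cong)
      have "0 = (\<Sum>r<n. (W *\<^sub>v v) $ r * cnj (ws ! j $ r))" using v(3) by simp
      also have "\<dots> = (\<Sum>r<n. \<Sum>i<?t. v $ i * (ws ! i $ r * cnj (ws ! j $ r)))"
      proof (intro sum.cong refl)
        fix r assume "r \<in> {..<n}"
        then show "(W *\<^sub>v v) $ r * cnj (ws ! j $ r) = (\<Sum>i<?t. v $ i * (ws ! i $ r * cnj (ws ! j $ r)))"
          using Wv[of r] by (simp add: sum_distrib_left sum_distrib_right mult_ac)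
      qed
      also have "\<dots> = (\<Sum>i<?t. v $ i * ip n (ws ! i) (ws ! j))"
        unfolding ip_def sum_distrib_left by (rule sum.swap)
      also have "\<dots> = (\<Sum>i<?t. if i = j then v $ i else 0)"
        using on j unfolding orthonormal_def by (intro sum.cong) auto
      also have "\<dots> = v $ j" using j by simp
      finally show ?thesis by simp
    qed
    then have "v = 0\<^sub>v ?t" using v(1) by (intro eq_vecI) auto
    with v(2) show False by simp
  qed
  have sub: "set ws \<subseteq> mat_kernel M" using ws ker M by (auto intro: mat_kernelI)
  have li: "K.lin_indpt (set ws)" using K.lindep_same[OF sub] indep by simp
  obtain B where B: "finite B" "K.basis B" using kernel_basis_exists[OF M] by blast
  have fd: "K.Ker.fin_dim" using B unfolding K.Ker.fin_dim_def K.Ker.basis_def by blast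
  have "card (set ws) \<le> K.dim" by (rule K.Ker.li_le_dim(2)[OF fd sub li])
  then show ?thesis using distinct_card[OF dist] by simp
qed

lemma orth_of_kernel:
  assumes M: "M \<in> carrier_mat n n" and t: "t \<le> kernel_dim M"
  shows "\<exists>ws. length ws = t \<and> set ws \<subseteq> carrier_vec n \<and> (\<forall>w\<in>set ws. M *\<^sub>v w = 0\<^sub>v n)
     \<and> orthonormal n ws"
proof -
  interpret K: kernel n n M by (unfold_locales, rule M)
  interpret C: cof_vec_space n "TYPE(complex)" .
  obtain B where B: "finite B" "K.basis B" using kernel_basis_exists[OF M] by blast
  have cardB: "card B = kernel_dim M" using K.Ker.dim_basis[OF B] by simp
  obtain xs where xs: "set xs = B" "distinct xs" using finite_distinct_list[OF B(1)] by blast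
  have lxs: "length xs = kernel_dim M" using cardB xs distinct_card by metis
  define ws0 where "ws0 = take t xs"
  have lws0: "length ws0 = t" unfolding ws0_def using lxs t by simp
  have d0: "distinct ws0" unfolding ws0_def using xs by simp
  have s0: "set ws0 \<subseteq> B" unfolding ws0_def using xs set_take_subset by metis
  have Bk: "B \<subseteq> mat_kernel M" using B(2) unfolding K.Ker.basis_def by simp
  have kc: "mat_kernel M \<subseteq> carrier_vec n" using mat_kernel_carrier M by blast
  have s0k: "set ws0 \<subseteq> mat_kernel M" using s0 Bk by blast
  have s0c: "set ws0 \<subseteq> carrier_vec n" using s0k kc by blast
  have liB: "K.lin_indpt B" using B(2) unfolding K.Ker.basis_def by simp
  have li0: "K.lin_indpt (set ws0)" by (rule K.Ker.subset_li_is_li[OF liB s0])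
  have ind0: "\<not> module.lin_dep class_ring (module_vec TYPE(complex) n) (set ws0)" using K.lindep_same[OF s0k] li0 by simp
  define us where "us = gram_schmidt n ws0"
  note gs = C.gram_schmidt_result[OF s0c d0 ind0 us_def]
  have usc: "set us \<subseteq> carrier_vec n" by (rule gs(3))
  have lus: "length us = t" using gs(4) lws0 by simp
  have "set us \<subseteq> LinearCombinations.module.span class_ring (module_vec TYPE(complex) n) (set us)" by (rule K.NC.in_own_span[OF usc])
  also have "LinearCombinations.module.span class_ring (module_vec TYPE(complex) n) (set us) = LinearCombinations.module.span class_ring (module_vec TYPE(complex) n) (set ws0)" using gs(1) by simp
  also have "\<dots> = K.span (set ws0)" using K.span_same[OF s0k] by simp
  also have "\<dots> \<subseteq> mat_kernel M" using K.Ker.span_is_subset2[OF s0k] by simp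
  finally have usk: "set us \<subseteq> mat_kernel M" .
  define nf where "nf u = complex_of_real (1 / sqrt (Re (ip n u u)))" for u
  define ws where "ws = map (\<lambda>u. nf u \<cdot>\<^sub>v u) us"
  have ipus: "ip n (us ! i) (us ! j) = 0 \<longleftrightarrow> i \<noteq> j" if "i < t" "j < t" for i j
  proof -
    have "us ! j \<in> carrier_vec n" using that lus usc by auto
    then have "us ! i \<bullet>c us ! j = ip n (us ! i) (us ! j)" by (rule cip)
    then show ?thesis using corthogonalD[OF gs(2), of i j] that lus by auto
  qed
  have wsc: "set ws \<subseteq> carrier_vec n" unfolding ws_def using usc by auto
  have wsk: "\<forall>w\<in>set ws. M *\<^sub>v w = 0\<^sub>v n"
  proof
    fix w assume "w \<in> set ws"
    then obtain u where u: "u \<in> set us" "w = nf u \<cdot>\<^sub>v u" unfolding ws_def by auto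
    have uc: "u \<in> carrier_vec n" using u usc by auto
    have "M *\<^sub>v u = 0\<^sub>v n" using u(1) usk mat_kernelD[OF M] by blast
    then show "M *\<^sub>v w = 0\<^sub>v n" using u mult_mat_vec[OF M uc] by simp
  qed
  have on: "orthonormal n ws" unfolding orthonormal_def
  proof (intro allI impI)
    fix i j assume ij: "i < length ws" "j < length ws"
    then have ij': "i < t" "j < t" unfolding ws_def using lus by auto
    have uc: "us ! i \<in> carrier_vec n" "us ! j \<in> carrier_vec n" using usc ij' lus by auto
    have "ip n (ws ! i) (ws ! j) = nf (us ! i) * cnj (nf (us ! j)) * ip n (us ! i) (us ! j)"
      unfolding ws_def using ij' lus ip_smult[OF uc] by simp
    also have "\<dots> = (if i = j then 1 else 0)"
    proof (cases "i = j")
      case True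
      let ?u = "us ! i"
      define \<rho> where "\<rho> = (\<Sum>r<n. (cmod (?u $ r))\<^sup>2)"
      have ipu: "ip n ?u ?u = complex_of_real \<rho>" unfolding \<rho>_def by (rule ip_self)
      have "\<rho> \<noteq> 0" using ipus[of i i] ij' ipu by auto
      moreover have "\<rho> \<ge> 0" unfolding \<rho>_def by (intro sum_nonneg) auto
      ultimately have rp: "\<rho> > 0" by simp
      have "nf ?u * cnj (nf ?u) * ip n ?u ?u = complex_of_real (1 / sqrt \<rho> * (1 / sqrt \<rho>) * \<rho>)"
        by (simp only: nf_def ipu complex_cnj_complex_of_real Re_complex_of_real of_real_mult[symmetric])
      also have "1 / sqrt \<rho> * (1 / sqrt \<rho>) * \<rho> = 1" using rp
        by (simp add: field_simps)
      finally show ?thesis using True by simp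
    next
      case False
      then show ?thesis using ipus[OF ij'] by simp
    qed
    finally show "ip n (ws ! i) (ws ! j) = (if i = j then 1 else 0)" .
  qed
  show ?thesis
    by (rule exI[of _ ws]) (use wsc wsk on lus in \<open>auto simp: ws_def\<close>)
qed

definition mconv :: "nat \<Rightarrow> (nat \<Rightarrow> complex mat) \<Rightarrow> complex mat \<Rightarrow> bool" where
  "mconv n X A \<longleftrightarrow> (\<forall>i<n. \<forall>j<n. (\<lambda>k. X k $$ (i, j)) \<longlonglongrightarrow> A $$ (i, j))"

lemma mult_entry:
  assumes "A \<in> carrier_mat n n" "B \<in> carrier_mat n n" "i < n" "j < n"
  shows "(A * B) $$ (i, j) = (\<Sum>l<n. A $$ (i, l) * B $$ (l, j))"
  using assms by (auto simp: scalar_prod_def lessThan_atLeast0 intro!: sum.cong)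

lemma mconv_mult:
  assumes X: "\<And>k. X k \<in> carrier_mat n n" and Y: "\<And>k. Y k \<in> carrier_mat n n"
    and A: "A \<in> carrier_mat n n" and B: "B \<in> carrier_mat n n"
    and cX: "mconv n X A" and cY: "mconv n Y B"
  shows "mconv n (\<lambda>k. X k * Y k) (A * B)"
  unfolding mconv_def
proof (intro allI impI)
  fix i j assume ij: "i < n" "j < n"
  have "(\<lambda>k. \<Sum>l<n. X k $$ (i, l) * Y k $$ (l, j)) \<longlonglongrightarrow> (\<Sum>l<n. A $$ (i, l) * B $$ (l, j))"
    using cX cY ij unfolding mconv_def by (intro tendsto_intros) auto
  then show "(\<lambda>k. (X k * Y k) $$ (i, j)) \<longlonglongrightarrow> (A * B) $$ (i, j)"
    using mult_entry[OF X Y ij] mult_entry[OF A B ij] by simp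
qed

lemma char_entry:
  assumes "A \<in> carrier_mat n n" "i < n" "j < n"
  shows "char_matrix A e $$ (i, j) = A $$ (i, j) - (if i = j then e else 0)"
  using assms unfolding char_matrix_def by auto

lemma mconv_char:
  assumes X: "\<And>k. X k \<in> carrier_mat n n" and A: "A \<in> carrier_mat n n"
    and cX: "mconv n X A" and F: "F \<longlonglongrightarrow> e"
  shows "mconv n (\<lambda>k. char_matrix (X k) (F k)) (char_matrix A e)"
  unfolding mconv_def
proof (intro allI impI)
  fix i j assume ij: "i < n" "j < n"
  have "(\<lambda>k. X k $$ (i, j) - (if i = j then F k else 0)) \<longlonglongrightarrow> A $$ (i, j) - (if i = j then e else 0)"
    using cX ij F unfolding mconv_def by (intro tendsto_intros) auto
  then show "(\<lambda>k. char_matrix (X k) (F k) $$ (i, j)) \<longlonglongrightarrow> char_matrix A e $$ (i, j)"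
    using char_entry[OF X ij] char_entry[OF A ij] by simp
qed

lemma mconv_cm:
  assumes X: "\<And>k. X k \<in> carrier_mat n n" and A: "A \<in> carrier_mat n n"
    and cX: "mconv n X A" and F: "\<forall>r\<in>set rs. (\<lambda>k. F k r) \<longlonglongrightarrow> g r"
  shows "mconv n (\<lambda>k. cm (X k) (map (F k) rs)) (cm A (map g rs))"
  using F
proof (induction rs)
  case Nil
  have "cm (X k) [] = 1\<^sub>m n" for k using X[of k] by simp
  then show ?case using A unfolding mconv_def by simp
next
  case (Cons r rs)
  have "mconv n (\<lambda>k. char_matrix (X k) (F k r) * cm (X k) (map (F k) rs))
      (char_matrix A (g r) * cm A (map g rs))"
    by (rule mconv_mult) (use X A Cons mconv_char[OF X A cX, of "\<lambda>k. F k r" "g r"] in auto)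
  then show ?case by simp
qed

lemma mconv_subseq:
  assumes "mconv n X A" "strict_mono \<sigma>"
  shows "mconv n (\<lambda>k. X (\<sigma> k)) A"
  unfolding mconv_def
proof (intro allI impI)
  fix i j assume "i < n" "j < n"
  then have "(\<lambda>k. X k $$ (i, j)) \<longlonglongrightarrow> A $$ (i, j)" using assms(1) unfolding mconv_def by blast
  from LIMSEQ_subseq_LIMSEQ[OF this assms(2)]
  show "(\<lambda>k. X (\<sigma> k) $$ (i, j)) \<longlonglongrightarrow> A $$ (i, j)" by (simp add: o_def)
qed

lemma mult_vec_entry:
  assumes "A \<in> carrier_mat n n" "v \<in> carrier_vec n" "i < n"
  shows "(A *\<^sub>v v) $ i = (\<Sum>l<n. A $$ (i, l) * v $ l)"
  using assms by (auto simp: scalar_prod_def lessThan_atLeast0 intro!: sum.cong)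

lemma kernel_limit:
  assumes X: "\<And>k. X k \<in> carrier_mat n n" and A: "A \<in> carrier_mat n n"
    and cX: "mconv n X A" and w: "\<And>k. w k \<in> carrier_vec n" and v: "v \<in> carrier_vec n"
    and cw: "\<And>r. r < n \<Longrightarrow> (\<lambda>k. w k $ r) \<longlonglongrightarrow> v $ r"
    and z: "\<And>k. X k *\<^sub>v w k = 0\<^sub>v n"
  shows "A *\<^sub>v v = 0\<^sub>v n"
proof (rule eq_vecI)
  show "dim_vec (A *\<^sub>v v) = dim_vec (0\<^sub>v n :: complex vec)" using A by simp
  fix i assume "i < dim_vec (0\<^sub>v n :: complex vec)"
  then have i: "i < n" by simp
  have "(\<lambda>k. \<Sum>l<n. X k $$ (i, l) * w k $ l) \<longlonglongrightarrow> (\<Sum>l<n. A $$ (i, l) * v $ l)"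
    using cX cw i unfolding mconv_def by (intro tendsto_intros) auto
  moreover have "(\<Sum>l<n. X k $$ (i, l) * w k $ l) = 0" for k
    using z[of k] mult_vec_entry[OF X w i, of k] i by (metis index_zero_vec(1))
  ultimately have "(\<lambda>k. 0) \<longlonglongrightarrow> (\<Sum>l<n. A $$ (i, l) * v $ l)" by simp
  then have "(\<Sum>l<n. A $$ (i, l) * v $ l) = 0" by (simp add: LIMSEQ_const_iff)
  then show "(A *\<^sub>v v) $ i = 0\<^sub>v n $ i" using mult_vec_entry[OF A v i] i by simp
qed

lemma ip_limit:
  assumes "\<And>r. r < n \<Longrightarrow> (\<lambda>k. u k $ r) \<longlonglongrightarrow> u' $ r"
    and "\<And>r. r < n \<Longrightarrow> (\<lambda>k. v k $ r) \<longlonglongrightarrow> v' $ r"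
  shows "(\<lambda>k. ip n (u k) (v k)) \<longlonglongrightarrow> ip n u' v'"
  unfolding ip_def using assms by (intro tendsto_intros) auto

lemma eig_bound:
  assumes A: "A \<in> carrier_mat n n" and C: "\<And>i j. i < n \<Longrightarrow> j < n \<Longrightarrow> cmod (A $$ (i, j)) \<le> C"
    and e: "eigenvalue A e"
  shows "cmod e \<le> real n * C"
proof -
  obtain v where v: "v \<in> carrier_vec n" "v \<noteq> 0\<^sub>v n" "A *\<^sub>v v = e \<cdot>\<^sub>v v"
    using e A unfolding eigenvalue_def eigenvector_def by auto
  have "\<exists>r<n. v $ r \<noteq> 0"
  proof (rule ccontr)
    assume "\<not> ?thesis"
    then have "v = 0\<^sub>v n" using v(1) by (intro eq_vecI) auto
    with v(2) show False by simp
  qed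
  then obtain r0 where r0: "r0 < n" "v $ r0 \<noteq> 0" by blast
  define S where "S = (\<lambda>r. cmod (v $ r)) ` {..<n}"
  have finS: "finite S" "S \<noteq> {}" unfolding S_def using r0 by auto
  obtain i where i: "i < n" "cmod (v $ i) = Max S" using Max_in[OF finS] unfolding S_def by auto
  have imax: "cmod (v $ r) \<le> cmod (v $ i)" if "r < n" for r
    using Max_ge[OF finS(1)] that i(2) unfolding S_def by auto
  have "cmod (v $ r0) > 0" using r0(2) by simp
  then have vi: "cmod (v $ i) > 0" using imax[OF r0(1)] by linarith
  have C0: "C \<ge> 0" using C[OF i(1) i(1)] norm_ge_zero order_trans by blast
  have "cmod e * cmod (v $ i) = cmod ((A *\<^sub>v v) $ i)" using v(3) v(1) i(1) by (simp add: norm_mult)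
  also have "\<dots> = cmod (\<Sum>l<n. A $$ (i, l) * v $ l)" using mult_vec_entry[OF A v(1) i(1)] by simp
  also have "\<dots> \<le> (\<Sum>l<n. cmod (A $$ (i, l) * v $ l))" by (rule norm_sum)
  also have "\<dots> \<le> (\<Sum>l<n. C * cmod (v $ i))"
  proof (intro sum_mono)
    fix l assume "l \<in> {..<n}"
    then have l: "l < n" by simp
    show "cmod (A $$ (i, l) * v $ l) \<le> C * cmod (v $ i)"
      unfolding norm_mult by (rule mult_mono[OF C[OF i(1) l] imax[OF l] C0 norm_ge_zero])
  qed
  also have "\<dots> = (real n * C) * cmod (v $ i)" by simp
  finally show ?thesis using vi by simp
qed

lemma size_le_sum_mset: "0 \<notin># (S::nat multiset) \<Longrightarrow> size S \<le> sum_mset S"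
proof (induction S)
  case empty then show ?case by simp
next
  case (add x S)
  then have "x \<ge> 1" "0 \<notin># S" by auto
  with add show ?case by simp
qed

lemma count_sum_le:
  assumes "finite A" shows "(\<Sum>x\<in>A. count M x) \<le> size M"
proof (induction M)
  case empty then show ?case by simp
next
  case (add a M)
  have "(\<Sum>x\<in>A. count (add_mset a M) x) = (\<Sum>x\<in>A. count M x + (if x = a then 1 else 0))"
    by (intro sum.cong) auto
  also have "\<dots> = (\<Sum>x\<in>A. count M x) + (\<Sum>x\<in>A. if x = a then 1 else 0)" by (rule sum.distrib)
  also have "(\<Sum>x\<in>A. if x = a then 1 else (0::nat)) \<le> 1"
    using assms by (cases "a \<in> A") (auto simp: sum.delta)
  finally show ?case using add by simp
qed

lemma count_sum_nth_le:
  assumes "distinct ls" shows "(\<Sum>l<length ls. count M (ls ! l)) \<le> size M"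
proof -
  have "(\<Sum>l<length ls. count M (ls ! l)) = sum_list (map (count M) ls)"
    by (simp add: sum_list_sum_nth lessThan_atLeast0)
  also have "\<dots> = (\<Sum>x\<in>set ls. count M x)" by (rule sum_list_distinct_conv_sum_set[OF assms])
  also have "\<dots> \<le> size M" by (rule count_sum_le) simp
  finally show ?thesis .
qed

lemma group_sum:
  fixes g :: "nat \<times> 'e \<Rightarrow> 'b::comm_monoid_add"
  assumes "distinct ls" "\<forall>x\<in>set xs. snd x \<in> set ls"
  shows "sum_list (map g xs) = (\<Sum>l<length ls. sum_list (map g (filter (\<lambda>(k, e). e = ls ! l) xs)))"
  using assms(2)
proof (induction xs)
  case Nil then show ?case by simp
next
  case (Cons x xs)
  obtain l0 where l0: "l0 < length ls" "ls ! l0 = snd x" using Cons.prems by (auto simp: in_set_conv_nth)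
  have iff: "snd x = ls ! l \<longleftrightarrow> l = l0" if "l < length ls" for l
    using l0 that assms(1) nth_eq_iff_index_eq by metis
  have "(\<Sum>l<length ls. sum_list (map g (filter (\<lambda>(k, e). e = ls ! l) (x # xs))))
     = (\<Sum>l<length ls. (if l = l0 then g x else 0) + sum_list (map g (filter (\<lambda>(k, e). e = ls ! l) xs)))"
    by (intro sum.cong refl) (use iff in \<open>auto simp: case_prod_beta\<close>)
  also have "\<dots> = g x + (\<Sum>l<length ls. sum_list (map g (filter (\<lambda>(k, e). e = ls ! l) xs)))"
    using l0(1) by (simp add: sum.distrib)
  finally show ?case using Cons by simp
qed

lemma filt_sum:
  "sum_list (map (\<lambda>(s, e). f s e) (filter (\<lambda>(k, e). e = c) xs))
   = sum_mset (image_mset (\<lambda>s. f s c) (mset (map fst (filter (\<lambda>(k, e). e = c) xs))))"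
  by (induction xs) auto

lemma mins_step:
  "(\<Sum>s\<in>#A. min (Suc k) s) = (\<Sum>s\<in>#A. min k s) + size (filter_mset (\<lambda>s. k < s) (A::nat multiset))"
  by (induction A) auto

lemma filter_step:
  "size (filter_mset (\<lambda>s. y < s) (A::nat multiset)) = count A (Suc y) + size (filter_mset (\<lambda>s. Suc y < s) A)"
  by (induction A) auto

lemma mset_from_mins:
  fixes A B :: "nat multiset"
  assumes "0 \<notin># A" "0 \<notin># B" "\<And>k. (\<Sum>s\<in>#A. min k s) = (\<Sum>s\<in>#B. min k s)"
  shows "A = B"
proof (rule multiset_eqI)
  fix x
  have f: "size (filter_mset (\<lambda>s. k < s) A) = size (filter_mset (\<lambda>s. k < s) B)" for k
    using assms(3)[of "Suc k"] assms(3)[of k] unfolding mins_step by simp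
  show "count A x = count B x"
  proof (cases x)
    case 0 then show ?thesis using assms(1,2) by (simp add: not_in_iff)
  next
    case (Suc y)
    then show ?thesis using f[of y] f[of "Suc y"] filter_step[of y A] filter_step[of y B] by simp
  qed
qed

lemma sm_sl: "(\<Sum>s\<in>#mset xs. f s) = sum_list (map f xs)" by (induction xs) auto

lemma segre_unique:
  assumes "jordan_nf (J :: complex mat) n_as" "jordan_nf J m_bs"
  shows "mset (map fst (filter (\<lambda>(k, e). e = c) n_as)) = mset (map fst (filter (\<lambda>(k, e). e = c) m_bs))"
proof (rule mset_from_mins)
  show "0 \<notin># mset (map fst (filter (\<lambda>(k, e). e = c) n_as))"
    using assms(1) unfolding jordan_nf_def by force
  show "0 \<notin># mset (map fst (filter (\<lambda>(k, e). e = c) m_bs))"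
    using assms(2) unfolding jordan_nf_def by force
  fix k
  have "(\<Sum>s\<in>#mset (map fst (filter (\<lambda>(k, e). e = c) n_as)). min k s) = dim_gen_eigenspace J c k"
    unfolding dim_gen_eigenspace[OF assms(1)] by (simp only: sm_sl)
  also have "\<dots> = (\<Sum>s\<in>#mset (map fst (filter (\<lambda>(k, e). e = c) m_bs)). min k s)"
    unfolding dim_gen_eigenspace[OF assms(2)] by (simp only: sm_sl)
  finally show "(\<Sum>s\<in>#mset (map fst (filter (\<lambda>(k, e). e = c) n_as)). min k s) =
    (\<Sum>s\<in>#mset (map fst (filter (\<lambda>(k, e). e = c) m_bs)). min k s)" .
qed

lemma sum_list_upt_delta:
  assumes "l0 < L"
  shows "sum_list (map (\<lambda>l. if l = l0 then f l else 0) [0..<L]) = (f l0 :: 'a::comm_monoid_add)"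
  by (subst sum_list_distinct_conv_sum_set) (use assms in \<open>auto simp: sum.delta\<close>)

lemma sum_mset_sum_list_ms: "sum_mset (sum_list (Ss :: nat multiset list)) = sum_list (map sum_mset Ss)"
  by (induction Ss) auto

lemma bundle_nonempty:
  assumes v: "valid_bundle_data n Ss"
  shows "\<exists>B. B \<in> matrix_bundle n Ss"
proof -
  define L where "L = length Ss"
  define blk where "blk l = map (\<lambda>s. (s, complex_of_nat l)) (sorted_list_of_multiset (Ss ! l))" for l
  define nas where "nas = concat (map blk [0..<L])"
  define B where "B = jordan_matrix nas"
  have pos: "S \<noteq> {#} \<and> 0 \<notin># S" if "S \<in> set Ss" for S using v that unfolding valid_bundle_data_def by auto
  have mfst: "mset (map fst nas) = sum_list (map (\<lambda>l. Ss ! l) [0..<L])"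
    unfolding nas_def blk_def by (simp add: map_concat mset_concat o_def)
  have "sum_list (map (\<lambda>l. Ss ! l) [0..<L]) = sum_list Ss" unfolding L_def by (metis map_nth)
  then have "sum_list (map fst nas) = n"
    using mfst v unfolding valid_bundle_data_def
    by (metis sum_mset_sum_list sum_mset_sum_list_ms)
  then have Bc: "B \<in> carrier_mat n n" unfolding B_def using jordan_matrix_carrier by metis
  have fst_pos: "0 \<notin> fst ` set nas"
  proof
    assume "0 \<in> fst ` set nas"
    then obtain l where l: "l < L" "0 \<in> set (sorted_list_of_multiset (Ss ! l))"
      unfolding nas_def blk_def by (auto simp: image_iff)
    then have "0 \<in># Ss ! l" by simp
    with pos[of "Ss ! l"] l(1) show False unfolding L_def by auto
  qed
  have jnf: "jordan_nf B nas" unfolding jordan_nf_def using fst_pos similar_mat_refl[OF Bc] B_def by auto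
  define ls where "ls = map (\<lambda>l. complex_of_nat l) [0..<L]"
  have lls: "length ls = length Ss" unfolding ls_def L_def by simp
  have dls: "distinct ls" unfolding ls_def by (simp add: distinct_map inj_on_def)
  have snd_nas: "snd ` set nas = set ls"
  proof
    show "snd ` set nas \<subseteq> set ls" unfolding nas_def blk_def ls_def by auto
    show "set ls \<subseteq> snd ` set nas"
    proof
      fix c assume "c \<in> set ls"
      then obtain l where l: "l < L" "c = complex_of_nat l" unfolding ls_def by auto
      then have "Ss ! l \<noteq> {#}" using pos[of "Ss ! l"] unfolding L_def by auto
      then obtain s where "s \<in># Ss ! l" by blast
      then have "(s, c) \<in> set nas" using l unfolding nas_def blk_def by auto
      then show "c \<in> snd ` set nas" by force
    qed
  qed
  have eig: "set ls = {c. eigenvalue B c}" using eigenvalue_jnf[OF Bc jnf] snd_nas by auto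
  have seg: "segre B (ls ! l) = Ss ! l" if l: "l < length Ss" for l
  proof -
    have ex: "\<exists>x. jordan_nf B x" using jnf by blast
    have jnf': "jordan_nf B (SOME x. jordan_nf B x)" by (rule someI_ex[OF ex])
    have lsl: "ls ! l = complex_of_nat l" unfolding ls_def using l L_def by simp
    have "segre B (ls ! l) = mset (map fst (filter (\<lambda>(k, e). e = ls ! l) nas))"
      unfolding segre_def Let_def by (rule segre_unique[OF jnf' jnf])
    also have "filter (\<lambda>(k, e). e = ls ! l) nas
       = concat (map (\<lambda>l'. if l' = l then blk l' else []) [0..<L])"
      unfolding nas_def filter_concat map_map lsl
      by (intro arg_cong[where f = concat] map_cong refl) (auto simp: blk_def filter_id_conv)
    also have "mset (map fst (concat (map (\<lambda>l'. if l' = l then blk l' else []) [0..<L])))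
       = sum_list (map (\<lambda>l'. if l' = l then Ss ! l' else {#}) [0..<L])"
    proof -
      have mb: "image_mset fst (mset (blk l')) = Ss ! l'" for l'
        unfolding blk_def by (simp add: multiset.map_comp o_def)
      show ?thesis by (simp add: map_concat mset_concat o_def mb if_distrib cong: if_cong)
    qed
    also have "\<dots> = Ss ! l" using l unfolding L_def by (rule sum_list_upt_delta)
    finally show ?thesis .
  qed
  have "B \<in> matrix_bundle n Ss"
    unfolding matrix_bundle_def using Bc lls dls eig seg by blast
  then show ?thesis by blast
qed

lemma count_list_rep: "count_list (replicate k x) x = k" by (induction k) auto

lemma sl_nth: "sum_list (map f xs) = (\<Sum>l<length xs. f (xs ! l))"
  by (simp add: sum_list_sum_nth lessThan_atLeast0)

lemma unif_bound:
  assumes "finite I" "\<forall>x\<in>I. \<exists>K. \<forall>k. norm (f x k :: complex) \<le> K"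
  shows "\<exists>C\<ge>0. \<forall>x\<in>I. \<forall>k. norm (f x k) \<le> C"
  using assms
proof (induction I rule: finite_induct)
  case empty then show ?case by auto
next
  case (insert y I)
  then obtain C where C: "C \<ge> 0" "\<forall>x\<in>I. \<forall>k. norm (f x k) \<le> C" by auto
  obtain K where K: "\<forall>k. norm (f y k) \<le> K" using insert.prems by auto
  show ?case
    by (rule exI[of _ "max C K"]) (use C K in \<open>auto simp: le_max_iff_disj\<close>)
qed

lemma jnf_exists_complex:
  assumes "A \<in> carrier_mat n n" shows "jordan_nf (A :: complex mat) (SOME x. jordan_nf A x)"
proof -
  obtain as where "char_poly A = (\<Prod>a\<leftarrow>as. [:- a, 1:])" using char_poly_factorized[OF assms] by blast
  from jordan_nf_exists[OF assms this] show ?thesis by (rule someI_ex)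
qed

lemma bundle_kernel:
  assumes A: "A \<in> carrier_mat n n" and d: "distinct ls" and ev: "set ls = {c. eigenvalue A c}"
    and seg: "\<forall>l<length ls. segre A (ls ! l) = Us ! l"
  shows "kernel_dim (cm A mus) = (\<Sum>l<length ls. \<Sum>s\<in>#Us ! l. min (count (mset mus) (ls ! l)) s)"
proof -
  define nas where "nas = (SOME x. jordan_nf A x)"
  have jnf: "jordan_nf A nas" unfolding nas_def by (rule jnf_exists_complex[OF A])
  have snd: "\<forall>x\<in>set nas. snd x \<in> set ls" using eigenvalue_jnf[OF A jnf] ev by auto
  have "kernel_dim (cm A mus) = (\<Sum>(s,e)\<leftarrow>nas. min (count (mset mus) e) s)"
    by (rule kernel_cm_jnf[OF A jnf])
  also have "\<dots> = (\<Sum>l<length ls. sum_list (map (\<lambda>(s,e). min (count (mset mus) e) s)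
        (filter (\<lambda>(k, e). e = ls ! l) nas)))"
    by (rule group_sum[OF d snd])
  also have "\<dots> = (\<Sum>l<length ls. \<Sum>s\<in>#Us ! l. min (count (mset mus) (ls ! l)) s)"
  proof (intro sum.cong refl)
    fix l assume l: "l \<in> {..<length ls}"
    have "segre A (ls ! l) = mset (map fst (filter (\<lambda>(k, e). e = ls ! l) nas))"
      unfolding segre_def Let_def nas_def by simp
    then have "mset (map fst (filter (\<lambda>(k, e). e = ls ! l) nas)) = Us ! l" using seg l by simp
    then show "sum_list (map (\<lambda>(s,e). min (count (mset mus) e) s) (filter (\<lambda>(k, e). e = ls ! l) nas))
      = (\<Sum>s\<in>#Us ! l. min (count (mset mus) (ls ! l)) s)"
      using filt_sum[of "\<lambda>s e. min (count (mset mus) e) s" "ls ! l" nas] by simp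
  qed
  finally show ?thesis .
qed

lemma mus_count:
  assumes "l < L"
  shows "c l \<le> count (mset (concat (map (\<lambda>l. replicate (c l) (ls ! l)) [0..<L]) @ zs)) (ls ! l)"
proof -
  have "c l = count_list (replicate (c l) (ls ! l)) (ls ! l)" by (simp add: count_list_rep)
  also have "\<dots> \<le> sum_list (map (\<lambda>xs. count_list xs (ls ! l)) (map (\<lambda>l. replicate (c l) (ls ! l)) [0..<L]))"
    by (rule member_le_sum_list) (use assms in auto)
  also have "\<dots> = count_list (concat (map (\<lambda>l. replicate (c l) (ls ! l)) [0..<L])) (ls ! l)"
    by (simp add: count_list_concat)
  also have "\<dots> \<le> count_list (concat (map (\<lambda>l. replicate (c l) (ls ! l)) [0..<L]) @ zs) (ls ! l)" by simp
  finally show ?thesis by (simp add: count_mset)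
qed

lemma mus_length:
  "length (concat (map (\<lambda>l. replicate (c l) (x l)) [0..<L])) = (\<Sum>l<L. c l)"
  by (simp add: length_concat o_def sl_nth)

lemma mus_set:
  assumes "L \<le> length ls"
  shows "set (concat (map (\<lambda>l. replicate (c l) (ls ! l)) [0..<L]) @ replicate k 0) \<subseteq> set ls \<union> {0}"
  using assms by (auto simp: set_replicate_conv_if split: if_splits)

lemma deg_seq_nth: "deg_seq Ss i = (\<Sum>l<length Ss. seq_term (Ss ! l) i)"
  unfolding deg_seq_def by (rule sl_nth)

lemma valid_size:
  assumes "valid_bundle_data n Ss" "l < length Ss"
  shows "size (Ss ! l) \<le> n"
proof -
  have S: "Ss ! l \<in> set Ss" using assms(2) by simp
  then have "size (Ss ! l) \<le> sum_mset (Ss ! l)"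
    using assms(1) unfolding valid_bundle_data_def by (intro size_le_sum_mset) auto
  also have "\<dots> \<le> sum_list (map sum_mset Ss)" using S by (intro member_le_sum_list) auto
  also have "\<dots> = n" using assms(1) unfolding valid_bundle_data_def by simp
  finally show ?thesis .
qed

lemma valid_total:
  assumes "valid_bundle_data n Ss" "n < N"
  shows "(\<Sum>i<N. deg_seq Ss i) = n"
proof -
  have "(\<Sum>i<N. deg_seq Ss i) = (\<Sum>l<length Ss. \<Sum>i<N. seq_term (Ss ! l) i)"
    unfolding deg_seq_nth by (rule sum.swap)
  also have "\<dots> = (\<Sum>l<length Ss. sum_mset (Ss ! l))"
  proof (intro sum.cong refl)
    fix l assume "l \<in> {..<length Ss}"
    then have "size (Ss ! l) \<le> N" using valid_size[OF assms(1), of l] assms(2) by simp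
    from seq_sum[of "\<lambda>x. x", OF refl this]
    show "(\<Sum>i<N. seq_term (Ss ! l) i) = sum_mset (Ss ! l)" by simp
  qed
  also have "\<dots> = sum_list (map sum_mset Ss)" by (rule sl_nth[symmetric])
  also have "\<dots> = n" using assms(1) unfolding valid_bundle_data_def by simp
  finally show ?thesis .
qed

lemma deg_zero:
  assumes "valid_bundle_data n Ss" "n < i"
  shows "deg_seq Ss i = 0"
  unfolding deg_seq_nth using valid_size[OF assms(1)] assms(2)
proof (intro sum.neutral ballI seq_term_zero)
  fix l assume "l \<in> {..<length Ss}"
  then have "size (Ss ! l) \<le> n" using valid_size[OF assms(1), of l] by simp
  then show "size (Ss ! l) \<le> i" using assms(2) by simp
qed

lemma deg_antimono: "i \<le> j \<Longrightarrow> deg_seq Ss j \<le> deg_seq Ss i"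
  unfolding deg_seq_nth by (intro sum_mono seq_term_antimono)

lemma key_ineq:
  assumes vS: "valid_bundle_data n Ss" and vT: "valid_bundle_data n Ts"
    and cl: "matrix_bundle n Ss \<subseteq> mat_closure n (matrix_bundle n Ts)"
  shows "(\<Sum>i<Suc n. min (deg_seq Ts i) m) \<le> (\<Sum>i<Suc n. min (deg_seq Ss i) m)"
proof -
  define N0 where "N0 = Suc n"
  define LT where "LT = length Ts"
  define LS where "LS = length Ss"
  define t where "t = (\<Sum>i<N0. min (deg_seq Ts i) m)"
  obtain B where B: "B \<in> matrix_bundle n Ss" using bundle_nonempty[OF vS] by blast
  then have "B \<in> mat_closure n (matrix_bundle n Ts)" using cl by blast
  then obtain X where Bc: "B \<in> carrier_mat n n" and X: "\<And>k. X k \<in> matrix_bundle n Ts"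
    and conv: "\<forall>i<n. \<forall>j<n. (\<lambda>k. X k $$ (i, j)) \<longlonglongrightarrow> B $$ (i, j)"
    unfolding mat_closure_def by blast
  have Xc: "X k \<in> carrier_mat n n" for k using X[of k] unfolding matrix_bundle_def by blast
  have "\<forall>k. \<exists>ls. length ls = LT \<and> distinct ls \<and> set ls = {c. eigenvalue (X k) c} \<and>
      (\<forall>i<LT. segre (X k) (ls ! i) = Ts ! i)"
    using X unfolding matrix_bundle_def LT_def by blast
  then obtain lsX where lsX: "\<And>k. length (lsX k) = LT" "\<And>k. distinct (lsX k)"
    "\<And>k. set (lsX k) = {c. eigenvalue (X k) c}" "\<And>k. \<forall>i<LT. segre (X k) (lsX k ! i) = Ts ! i"
    by metis
  obtain c where c: "(\<Sum>l<LT. c l) \<le> m"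
    "(\<Sum>i<N0. min (\<Sum>l<LT. seq_term (Ts ! l) i) m) \<le> (\<Sum>l<LT. \<Sum>i<N0. min (seq_term (Ts ! l) i) (c l))"
  proof -
    have mono: "\<And>l i j. i \<le> j \<Longrightarrow> seq_term (Ts ! l) j \<le> seq_term (Ts ! l) i"
      by (rule seq_term_antimono)
    have zero: "seq_term (Ts ! l) i = 0" if "l < LT" "N0 \<le> i" for l i
    proof (rule seq_term_zero)
      show "size (Ts ! l) \<le> i" using valid_size[OF vT, of l] that unfolding LT_def N0_def by simp
    qed
    show ?thesis using lower_comb[where a = "\<lambda>l i. seq_term (Ts ! l) i" and N = N0 and L = LT and m = m, OF mono zero] that
      by blast
  qed
  define mus where "mus k = concat (map (\<lambda>l. replicate (c l) (lsX k ! l)) [0..<LT]) @ replicate (m - (\<Sum>l<LT. c l)) 0" for k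
  have lmus: "length (mus k) = m" for k unfolding mus_def using mus_length[of c "\<lambda>l. lsX k ! l" LT] c(1) by simp
  have cmus: "c l \<le> count (mset (mus k)) (lsX k ! l)" if "l < LT" for k l
    unfolding mus_def by (rule mus_count[OF that])
  have smus: "set (mus k) \<subseteq> set (lsX k) \<union> {0}" for k
    unfolding mus_def by (rule mus_set) (simp add: lsX(1))
  have low: "t \<le> kernel_dim (cm (X k) (mus k))" for k
  proof -
    have "kernel_dim (cm (X k) (mus k))
        = (\<Sum>l<length (lsX k). \<Sum>s\<in>#Ts ! l. min (count (mset (mus k)) (lsX k ! l)) s)"
      by (rule bundle_kernel[OF Xc lsX(2) lsX(3)]) (use lsX(4) lsX(1) in auto)
    also have "\<dots> \<ge> (\<Sum>l<LT. \<Sum>s\<in>#Ts ! l. min (c l) s)"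
      unfolding lsX(1)
    proof (intro sum_mono sum_mset_mono)
      fix l s assume "l \<in> {..<LT}"
      then have "l < LT" by simp
      show "min (c l) s \<le> min (count (mset (mus k)) (lsX k ! l)) s"
        by (rule min.mono[OF cmus[OF \<open>l < LT\<close>] order_refl])
    qed
    finally have 1: "(\<Sum>l<LT. \<Sum>s\<in>#Ts ! l. min (c l) s) \<le> kernel_dim (cm (X k) (mus k))" .
    have "(\<Sum>l<LT. \<Sum>s\<in>#Ts ! l. min (c l) s) = (\<Sum>l<LT. \<Sum>i<N0. min (seq_term (Ts ! l) i) (c l))"
    proof (intro sum.cong refl)
      fix l assume "l \<in> {..<LT}"
      then have "size (Ts ! l) \<le> N0" using valid_size[OF vT, of l] unfolding LT_def N0_def by simp
      from seq_sum[of "\<lambda>s. min s (c l)", OF _ this]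
      show "(\<Sum>s\<in>#Ts ! l. min (c l) s) = (\<Sum>i<N0. min (seq_term (Ts ! l) i) (c l))"
        by (simp add: min.commute)
    qed
    moreover have "t = (\<Sum>i<N0. min (\<Sum>l<LT. seq_term (Ts ! l) i) m)"
      unfolding t_def deg_seq_nth LT_def ..
    ultimately show ?thesis using 1 c(2) by linarith
  qed
  have "\<forall>x\<in>{..<n} \<times> {..<n}. \<exists>K. \<forall>k. norm (X k $$ x) \<le> K"
  proof
    fix x assume x: "x \<in> {..<n} \<times> {..<n}"
    then obtain i j where ij: "x = (i, j)" "i < n" "j < n" by auto
    then have "(\<lambda>k. X k $$ (i, j)) \<longlonglongrightarrow> B $$ (i, j)" using conv by blast
    then have "convergent (\<lambda>k. X k $$ (i, j))" unfolding convergent_def by blast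
    then have "Bseq (\<lambda>k. X k $$ (i, j))" by (rule convergent_imp_Bseq)
    then show "\<exists>K. \<forall>k. norm (X k $$ x) \<le> K" unfolding Bseq_def ij(1) by blast
  qed
  from unif_bound[OF _ this] obtain C where C: "C \<ge> 0"
    "\<And>k i j. i < n \<Longrightarrow> j < n \<Longrightarrow> cmod (X k $$ (i, j)) \<le> C" by auto
  have mub: "cmod (mus k ! r) \<le> real n * C" if "r \<in> {..<m}" for k r
  proof -
    have "mus k ! r \<in> set (mus k)" using that lmus[of k] by simp
    then have "mus k ! r \<in> set (lsX k) \<or> mus k ! r = 0" using smus[of k] by blast
    then show ?thesis
    proof
      assume "mus k ! r \<in> set (lsX k)"
      then have "eigenvalue (X k) (mus k ! r)" using lsX(3)[of k] by blast
      moreover have Ck: "\<And>i j. i < n \<Longrightarrow> j < n \<Longrightarrow> cmod (X k $$ (i, j)) \<le> C" using C(2) by blast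
      ultimately show ?thesis using eig_bound[OF Xc Ck] by blast
    qed (use C(1) in simp)
  qed
  obtain \<sigma>1 g where s1: "strict_mono \<sigma>1" "\<forall>r\<in>{..<m}. (\<lambda>k. mus (\<sigma>1 k) ! r) \<longlonglongrightarrow> g r"
    using multi_bw[of "{..<m}" "\<lambda>k r. mus k ! r" "real n * C"] mub by blast
  have "\<forall>k. \<exists>ws. length ws = t \<and> set ws \<subseteq> carrier_vec n \<and>
      (\<forall>w\<in>set ws. cm (X k) (mus k) *\<^sub>v w = 0\<^sub>v n) \<and> orthonormal n ws"
    using orth_of_kernel[OF cm_carrier[OF Xc] low] by blast
  then obtain ws where ws: "\<And>k. length (ws k) = t" "\<And>k. set (ws k) \<subseteq> carrier_vec n"
    "\<And>k. \<forall>w\<in>set (ws k). cm (X k) (mus k) *\<^sub>v w = 0\<^sub>v n" "\<And>k. orthonormal n (ws k)"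
    by metis
  have wsb: "cmod (ws k ! q $ r) \<le> 1" if "q < t" "r < n" for k q r
  proof (rule ip_entry_bound[OF _ that(2)])
    show "ip n (ws k ! q) (ws k ! q) = 1" using ws(4)[of k] ws(1)[of k] that(1)
      unfolding orthonormal_def by auto
  qed
  obtain \<sigma>2 h where s2: "strict_mono \<sigma>2"
    "\<forall>x\<in>{..<t} \<times> {..<n}. (\<lambda>k. (case x of (q, r) \<Rightarrow> ws (\<sigma>1 (\<sigma>2 k)) ! q $ r)) \<longlonglongrightarrow> h x"
    using multi_bw[of "{..<t} \<times> {..<n}" "\<lambda>k x. case x of (q, r) \<Rightarrow> ws (\<sigma>1 k) ! q $ r" 1] wsb
    by fastforce
  define \<rho> where "\<rho> k = \<sigma>1 (\<sigma>2 k)" for k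
  have rho: "strict_mono \<rho>" unfolding \<rho>_def using strict_mono_o[OF s1(1) s2(1)] by (simp add: o_def)
  define mu where "mu = map g [0..<m]"
  have convX: "mconv n (\<lambda>k. X (\<rho> k)) B"
    by (rule mconv_subseq[OF _ rho]) (use conv in \<open>simp add: mconv_def\<close>)
  have convmu: "\<forall>r\<in>set [0..<m]. (\<lambda>k. mus (\<rho> k) ! r) \<longlonglongrightarrow> g r"
  proof
    fix r assume "r \<in> set [0..<m]"
    then have "(\<lambda>k. mus (\<sigma>1 k) ! r) \<longlonglongrightarrow> g r" using s1(2) by simp
    from LIMSEQ_subseq_LIMSEQ[OF this s2(1)]
    show "(\<lambda>k. mus (\<rho> k) ! r) \<longlonglongrightarrow> g r" by (simp add: o_def \<rho>_def)
  qed
  have eqcm: "cm (X (\<rho> k)) (mus (\<rho> k)) = cm (X (\<rho> k)) (map (\<lambda>r. mus (\<rho> k) ! r) [0..<m])" for k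
    using map_nth[of "mus (\<rho> k)"] lmus[of "\<rho> k"] by simp
  have convcm: "mconv n (\<lambda>k. cm (X (\<rho> k)) (mus (\<rho> k))) (cm B mu)"
    unfolding eqcm mu_def by (rule mconv_cm[OF Xc Bc convX convmu])
  define wl where "wl = map (\<lambda>q. vec n (\<lambda>r. h (q, r))) [0..<t]"
  have lwl: "length wl = t" unfolding wl_def by simp
  have wlc: "set wl \<subseteq> carrier_vec n" unfolding wl_def by auto
  have convw: "(\<lambda>k. ws (\<rho> k) ! q $ r) \<longlonglongrightarrow> wl ! q $ r" if "q < t" "r < n" for q r
    using s2(2) that unfolding wl_def \<rho>_def by auto
  have kerB: "\<forall>w\<in>set wl. cm B mu *\<^sub>v w = 0\<^sub>v n"
  proof
    fix w assume "w \<in> set wl"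
    then obtain q where q: "q < t" "w = wl ! q" using lwl by (auto simp: in_set_conv_nth)
    show "cm B mu *\<^sub>v w = 0\<^sub>v n" unfolding q(2)
    proof (rule kernel_limit[OF cm_carrier[OF Xc] cm_carrier[OF Bc] convcm])
      show "ws (\<rho> k) ! q \<in> carrier_vec n" for k using ws(1,2)[of "\<rho> k"] q(1) by auto
      show "wl ! q \<in> carrier_vec n" using wlc lwl q(1) by auto
      show "(\<lambda>k. ws (\<rho> k) ! q $ r) \<longlonglongrightarrow> wl ! q $ r" if "r < n" for r by (rule convw[OF q(1) that])
      show "cm (X (\<rho> k)) (mus (\<rho> k)) *\<^sub>v (ws (\<rho> k) ! q) = 0\<^sub>v n" for k
        using ws(1,3)[of "\<rho> k"] q(1) by auto
    qed
  qed
  have onB: "orthonormal n wl" unfolding orthonormal_def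
  proof (intro allI impI)
    fix q q' assume qq: "q < length wl" "q' < length wl"
    have "(\<lambda>k. ip n (ws (\<rho> k) ! q) (ws (\<rho> k) ! q')) \<longlonglongrightarrow> ip n (wl ! q) (wl ! q')"
      by (rule ip_limit) (use convw qq lwl in auto)
    moreover have "ip n (ws (\<rho> k) ! q) (ws (\<rho> k) ! q') = (if q = q' then 1 else 0)" for k
      using ws(4)[of "\<rho> k"] ws(1)[of "\<rho> k"] qq lwl unfolding orthonormal_def by auto
    ultimately show "ip n (wl ! q) (wl ! q') = (if q = q' then 1 else 0)"
      by (simp add: LIMSEQ_const_iff)
  qed
  have tB: "t \<le> kernel_dim (cm B mu)"
    using kernel_ge_orth[OF cm_carrier[OF Bc] wlc kerB onB] lwl by simp
  obtain lsB where lsB: "length lsB = LS" "distinct lsB" "set lsB = {c. eigenvalue B c}"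
    "\<forall>i<LS. segre B (lsB ! i) = Ss ! i"
    using B unfolding matrix_bundle_def LS_def by blast
  define cc where "cc l = count (mset mu) (lsB ! l)" for l
  have "kernel_dim (cm B mu) = (\<Sum>l<length lsB. \<Sum>s\<in>#Ss ! l. min (count (mset mu) (lsB ! l)) s)"
    by (rule bundle_kernel[OF Bc lsB(2) lsB(3)]) (use lsB(1,4) in auto)
  also have "\<dots> = (\<Sum>l<LS. \<Sum>i<N0. min (seq_term (Ss ! l) i) (cc l))"
    unfolding lsB(1)
  proof (intro sum.cong refl)
    fix l assume "l \<in> {..<LS}"
    then have "size (Ss ! l) \<le> N0" using valid_size[OF vS, of l] unfolding LS_def N0_def by simp
    from seq_sum[of "\<lambda>s. min s (cc l)", OF _ this]
    show "(\<Sum>s\<in>#Ss ! l. min (count (mset mu) (lsB ! l)) s) = (\<Sum>i<N0. min (seq_term (Ss ! l) i) (cc l))"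
      by (simp add: min.commute cc_def)
  qed
  also have "\<dots> \<le> (\<Sum>i<N0. min (\<Sum>l<LS. seq_term (Ss ! l) i) m)"
  proof (rule upper_comb)
    have "(\<Sum>l<LS. cc l) \<le> size (mset mu)"
      unfolding cc_def using count_sum_nth_le[OF lsB(2), of "mset mu"] lsB(1) by simp
    then show "(\<Sum>l<LS. cc l) \<le> m" unfolding mu_def by simp
  qed
  finally have "t \<le> (\<Sum>i<N0. min (\<Sum>l<LS. seq_term (Ss ! l) i) m)" using tB by linarith
  then show ?thesis unfolding t_def N0_def LS_def deg_seq_nth .
qed

theorem lemma4:
  fixes n :: nat and Ss Ts :: "nat multiset list"
  assumes "valid_bundle_data n Ss"
    and "valid_bundle_data n Ts"
    and "matrix_bundle n Ss \<subseteq> mat_closure n (matrix_bundle n Ts)"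
    and "length Ss \<ge> length Ts"
  shows "dominates (deg_seq Ts) (deg_seq Ss)"
  unfolding dominates_def
proof
  fix j
  show "(\<Sum>i<j. deg_seq Ss i) \<le> (\<Sum>i<j. deg_seq Ts i)"
  proof (rule dom_final[where NB = "Suc n"])
    show "\<And>i j. i \<le> j \<Longrightarrow> deg_seq Ts j \<le> deg_seq Ts i" by (rule deg_antimono)
    show "\<And>i. Suc n \<le> i \<Longrightarrow> deg_seq Ss i = 0" using deg_zero[OF assms(1)] by simp
    show "\<And>i. Suc n \<le> i \<Longrightarrow> deg_seq Ts i = 0" using deg_zero[OF assms(2)] by simp
    have e1: "(\<Sum>i<Suc n. deg_seq Ss i) = n" by (rule valid_total[OF assms(1)]) (rule lessI)
    have e2: "(\<Sum>i<Suc n. deg_seq Ts i) = n" by (rule valid_total[OF assms(2)]) (rule lessI)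
    show "(\<Sum>i<Suc n. deg_seq Ss i) = (\<Sum>i<Suc n. deg_seq Ts i)" unfolding e1 e2 ..
    show "\<And>m. (\<Sum>i<Suc n. min (deg_seq Ts i) m) \<le> (\<Sum>i<Suc n. min (deg_seq Ss i) m)"
      by (rule key_ineq[OF assms(1) assms(2) assms(3)])
  qed
qed

end
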